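(* Let $A, B \in M_n(\mathbb{C})$ and assume that $A$ satisfies: for all $\lambda,\mu \in \mathrm{Sp}(A)$, if $\lambda - \mu \in 2i\pi\mathbb{Q}$ then $\lambda - \mu \in 2i\pi\mathbb{Z}$. Then there exists an integer $k \geq 1$ such that the map $\gamma_k : \mathrm{Sp}(e^A) \times \mathrm{Sp}(e^B) \to \mathbb{C}$, $(\lambda,\mu) \mapsto \lambda^k\mu$, is injective.
   Context: $e^M$ denotes the matrix exponential; $\mathrm{Sp}(M)$ is the set of eigenvalues of $M$. *)

theory Defs
  imports Complex_Main "Jordan_Normal_Form.Matrix" "Jordan_Normal_Form.Char_Poly"
begin

definition mat_exp :: "complex mat \<Rightarrow> complex mat" where
  "mat_exp M = mat (dim_row M) (dim_col M)
     (\<lambda>(i, j). \<Sum>k. (M ^\<^sub>m k) $$ (i, j) / of_nat (fact k))"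

definition Sp :: "complex mat \<Rightarrow> complex set" where
  "Sp M = {x. eigenvalue M x}"

end

theory Submission
  imports Defs "Jordan_Normal_Form.Schur_Decomposition" "HOL-Analysis.Complex_Transcendental"
begin

lemma mult_entry:
  fixes A B :: "'a::comm_ring_1 mat"
  assumes "A \<in> carrier_mat n m" "B \<in> carrier_mat m p" "i < n" "j < p"
  shows "(A * B) $$ (i,j) = (\<Sum>l<m. A $$ (i,l) * B $$ (l,j))"
  using assms by (auto simp: index_mult_mat scalar_prod_def lessThan_atLeast0 intro!: sum.cong)

lemma pow_carrier: "M \<in> carrier_mat n n \<Longrightarrow> M ^\<^sub>m k \<in> carrier_mat n n"
  by simp

lemma pow_entry_bound:
  fixes M :: "complex mat"
  assumes M: "M \<in> carrier_mat n n"
  shows "i < n \<Longrightarrow> j < n \<Longrightarrow> norm ((M ^\<^sub>m k) $$ (i,j)) \<le> (\<Sum>a<n. \<Sum>b<n. norm (M$$(a,b)))^k"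
proof (induction k arbitrary: i j)
  case 0
  then show ?case using M by (cases "i = j") auto
next
  case (Suc k)
  let ?m = "\<Sum>a<n. \<Sum>b<n. norm (M$$(a,b))"
  have "(M ^\<^sub>m Suc k) $$ (i,j) = (\<Sum>l<n. (M ^\<^sub>m k) $$ (i,l) * M $$ (l,j))"
    using Suc.prems M by (simp only: pow_mat.simps(2), intro mult_entry[of _ n n _ n]) auto
  hence "norm ((M ^\<^sub>m Suc k) $$ (i,j)) \<le> (\<Sum>l<n. norm ((M ^\<^sub>m k) $$ (i,l)) * norm (M $$ (l,j)))"
    by (metis (no_types, lifting) norm_mult norm_sum sum.cong)
  also have "\<dots> \<le> (\<Sum>l<n. ?m^k * norm (M $$ (l,j)))"
    by (intro sum_mono mult_right_mono Suc.IH Suc.prems) (auto)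
  also have "\<dots> = ?m^k * (\<Sum>l<n. norm (M $$ (l,j)))" by (simp add: sum_distrib_left)
  also have "(\<Sum>l<n. norm (M $$ (l,j))) \<le> ?m"
    by (intro sum_mono member_le_sum) (use Suc.prems in auto)
  hence "?m^k * (\<Sum>l<n. norm (M $$ (l,j))) \<le> ?m^k * ?m"
    by (intro mult_left_mono) (auto intro!: zero_le_power sum_nonneg)
  finally show ?case by (simp add: mult.commute)
qed

lemma pow_entry_summable:
  fixes M :: "complex mat"
  assumes M: "M \<in> carrier_mat n n" "i < n" "j < n"
  shows "summable (\<lambda>k. (M ^\<^sub>m k) $$ (i,j) / of_nat (fact k))"
proof -
  let ?m = "\<Sum>a<n. \<Sum>b<n. norm (M$$(a,b))"
  show ?thesis
  proof (rule summable_comparison_test[of _ "\<lambda>k. inverse (fact k) * ?m ^ k"])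
    show "summable (\<lambda>k. inverse (fact k) * ?m ^ k)" by (rule summable_exp)
    show "\<exists>N. \<forall>k\<ge>N. norm ((M ^\<^sub>m k) $$ (i,j) / of_nat (fact k)) \<le> inverse (fact k) * ?m ^ k"
    proof (intro exI allI impI)
      fix k :: nat
      have "norm ((M ^\<^sub>m k) $$ (i,j) / of_nat (fact k)) = norm ((M ^\<^sub>m k) $$ (i,j)) / fact k"
        by (simp add: norm_divide)
      also have "\<dots> \<le> ?m ^ k / fact k"
        by (intro divide_right_mono pow_entry_bound M) auto
      finally show "norm ((M ^\<^sub>m k) $$ (i,j) / of_nat (fact k)) \<le> inverse (fact k) * ?m ^ k"
        by (simp add: field_simps)
    qed
  qed
qed

lemma mat_exp_carrier: "A \<in> carrier_mat n n \<Longrightarrow> mat_exp A \<in> carrier_mat n n"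
  by (simp add: mat_exp_def)

lemma mat_exp_entry: "A \<in> carrier_mat n n \<Longrightarrow> i < n \<Longrightarrow> j < n \<Longrightarrow>
   mat_exp A $$ (i,j) = (\<Sum>k. (A ^\<^sub>m k) $$ (i,j) / of_nat (fact k))"
  by (simp add: mat_exp_def)

lemma triple_entry:
  fixes P M Q :: "'a::comm_ring_1 mat"
  assumes "P \<in> carrier_mat n n" "M \<in> carrier_mat n n" "Q \<in> carrier_mat n n" "i < n" "j < n"
  shows "(P * M * Q) $$ (i,j) = (\<Sum>a<n. \<Sum>b<n. P$$(i,a) * M$$(a,b) * Q$$(b,j))"
proof -
  have "(P * M * Q) $$ (i,j) = (\<Sum>b<n. (P * M) $$ (i,b) * Q $$ (b,j))"
    using assms by (intro mult_entry[of _ n n _ n]) auto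
  also have "\<dots> = (\<Sum>b<n. (\<Sum>a<n. P$$(i,a) * M$$(a,b)) * Q $$ (b,j))"
    using assms by (intro sum.cong refl arg_cong2[where f="(*)"] mult_entry[of _ n n _ n]) auto
  also have "\<dots> = (\<Sum>b<n. \<Sum>a<n. P$$(i,a) * M$$(a,b) * Q $$ (b,j))"
    by (simp add: sum_distrib_right)
  also have "\<dots> = (\<Sum>a<n. \<Sum>b<n. P$$(i,a) * M$$(a,b) * Q$$(b,j))"
    by (rule sum.swap)
  finally show ?thesis .
qed

lemma mat_exp_sim:
  fixes A J P Q :: "complex mat"
  assumes w: "similar_mat_wit A J P Q" and A: "A \<in> carrier_mat n n"
  shows "mat_exp A = P * mat_exp J * Q"
proof -
  from w A have J: "J \<in> carrier_mat n n" and P: "P \<in> carrier_mat n n" and Q: "Q \<in> carrier_mat n n"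
    unfolding similar_mat_wit_def Let_def by auto
  have EJ: "mat_exp J \<in> carrier_mat n n" using J by (rule mat_exp_carrier)
  show ?thesis
  proof (rule eq_matI)
    show "dim_row (mat_exp A) = dim_row (P * mat_exp J * Q)" using A P EJ Q by (simp add: mat_exp_def)
    show "dim_col (mat_exp A) = dim_col (P * mat_exp J * Q)" using A P EJ Q by (simp add: mat_exp_def)
    fix i j assume "i < dim_row (P * mat_exp J * Q)" "j < dim_col (P * mat_exp J * Q)"
    hence ij: "i < n" "j < n" using P Q by auto
    define f where "f a b k = P$$(i,a) * Q$$(b,j) * ((J ^\<^sub>m k) $$ (a,b) / of_nat (fact k))" for a b k
    have sf: "summable (f a b)" if "a < n" "b < n" for a b
      unfolding f_def by (intro summable_mult pow_entry_summable[OF J] that)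
    have "mat_exp A $$ (i,j) = (\<Sum>k. (A ^\<^sub>m k) $$ (i,j) / of_nat (fact k))"
      using A ij by (rule mat_exp_entry)
    also have "\<dots> = (\<Sum>k. \<Sum>a<n. \<Sum>b<n. f a b k)"
    proof (rule arg_cong[where f=suminf], rule ext)
      fix k
      have "A ^\<^sub>m k = P * J ^\<^sub>m k * Q" using w by (rule similar_mat_wit_pow_id)
      hence "(A ^\<^sub>m k) $$ (i,j) = (\<Sum>a<n. \<Sum>b<n. P$$(i,a) * (J ^\<^sub>m k)$$(a,b) * Q$$(b,j))"
        using triple_entry[OF P pow_carrier[OF J] Q ij] by simp
      thus "(A ^\<^sub>m k) $$ (i,j) / of_nat (fact k) = (\<Sum>a<n. \<Sum>b<n. f a b k)"
        by (simp add: f_def sum_divide_distrib ac_simps)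
    qed
    also have "\<dots> = (\<Sum>a<n. \<Sum>k. \<Sum>b<n. f a b k)"
      by (rule suminf_sum) (auto intro!: summable_sum sf)
    also have "\<dots> = (\<Sum>a<n. \<Sum>b<n. \<Sum>k. f a b k)"
      by (intro sum.cong refl suminf_sum sf) auto
    also have "\<dots> = (\<Sum>a<n. \<Sum>b<n. P$$(i,a) * mat_exp J $$ (a,b) * Q$$(b,j))"
    proof (intro sum.cong refl)
      fix a b assume "a \<in> {..<n}" "b \<in> {..<n}"
      hence ab: "a < n" "b < n" by auto
      have "(\<Sum>k. f a b k) = P$$(i,a) * Q$$(b,j) * (\<Sum>k. (J ^\<^sub>m k) $$ (a,b) / of_nat (fact k))"
        unfolding f_def by (intro suminf_mult pow_entry_summable[OF J ab])
      thus "(\<Sum>k. f a b k) = P$$(i,a) * mat_exp J $$ (a,b) * Q$$(b,j)"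
        using mat_exp_entry[OF J ab] by (simp add: ac_simps)
    qed
    also have "\<dots> = (P * mat_exp J * Q) $$ (i,j)"
      by (rule triple_entry[OF P EJ Q ij, symmetric])
    finally show "mat_exp A $$ (i,j) = (P * mat_exp J * Q) $$ (i,j)" .
  qed
qed

lemma ut_pow:
  fixes J :: "'a::comm_ring_1 mat"
  assumes J: "J \<in> carrier_mat n n" and ut: "upper_triangular J"
  shows "(\<forall>i<n. \<forall>j<i. (J ^\<^sub>m k) $$ (i,j) = 0) \<and> (\<forall>i<n. (J ^\<^sub>m k) $$ (i,i) = J$$(i,i)^k)"
proof (induction k)
  case 0
  then show ?case using J by auto
next
  case (Suc k)
  have e: "(J ^\<^sub>m Suc k) $$ (i,j) = (\<Sum>l<n. (J ^\<^sub>m k) $$ (i,l) * J $$ (l,j))" if "i<n" "j<n" for i j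
    using that J by (simp only: pow_mat.simps(2), intro mult_entry[of _ n n _ n]) auto
  have z: "J $$ (l,j) = 0" if "j < l" "l < n" for l j using ut J that by auto
  have "(J ^\<^sub>m Suc k) $$ (i,j) = 0" if "i<n" "j<i" for i j
  proof -
    have "(\<Sum>l<n. (J ^\<^sub>m k) $$ (i,l) * J $$ (l,j)) = 0"
    proof (rule sum.neutral, intro ballI)
      fix l assume "l \<in> {..<n}"
      thus "(J ^\<^sub>m k) $$ (i,l) * J $$ (l,j) = 0"
        using Suc.IH z[of j l] that by (cases "l < i") auto
    qed
    thus ?thesis using e[of i j] that by simp
  qed
  moreover have "(J ^\<^sub>m Suc k) $$ (i,i) = J$$(i,i)^Suc k" if "i<n" for i
  proof -
    have "(\<Sum>l<n. (J ^\<^sub>m k) $$ (i,l) * J $$ (l,i)) = (\<Sum>l<n. if l = i then J$$(i,i)^k * J$$(i,i) else 0)"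
    proof (rule sum.cong[OF refl])
      fix l assume "l \<in> {..<n}"
      thus "(J ^\<^sub>m k) $$ (i,l) * J $$ (l,i) = (if l = i then J$$(i,i)^k * J$$(i,i) else 0)"
        using Suc.IH z[of i l] that by (cases "l < i"; cases "l = i") auto
    qed
    thus ?thesis using e[of i i] that by (simp add: mult.commute)
  qed
  ultimately show ?case by auto
qed

lemma exp_series: "(\<Sum>k. (x::complex)^k / of_nat (fact k)) = exp x"
proof -
  have "(\<lambda>k. x^k / of_nat (fact k)) = (\<lambda>k. x^k /\<^sub>R fact k)"
    by (auto simp: scaleR_conv_of_real divide_inverse mult.commute)
  thus ?thesis using exp_converges[of x] sums_unique by metis
qed

lemma mat_exp_ut:
  fixes J :: "complex mat"
  assumes J: "J \<in> carrier_mat n n" and ut: "upper_triangular J"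
  shows "upper_triangular (mat_exp J)" "\<And>i. i < n \<Longrightarrow> mat_exp J $$ (i,i) = exp (J $$ (i,i))"
proof -
  show "upper_triangular (mat_exp J)"
  proof (rule upper_triangularI)
    fix i j assume "j < i" "i < dim_row (mat_exp J)"
    hence "i < n" "j < n" "j < i" using J by (auto simp: mat_exp_def)
    thus "mat_exp J $$ (i,j) = 0" using ut_pow[OF J ut] mat_exp_entry[OF J] by simp
  qed
  fix i assume "i < n"
  thus "mat_exp J $$ (i,i) = exp (J $$ (i,i))"
    using ut_pow[OF J ut] mat_exp_entry[OF J] exp_series by simp
qed

lemma ut_eigenvalue:
  fixes U :: "complex mat"
  assumes U: "U \<in> carrier_mat n n" and ut: "upper_triangular U"
  shows "eigenvalue U x \<longleftrightarrow> (\<exists>i<n. x = U $$ (i,i))"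
proof -
  have "eigenvalue U x \<longleftrightarrow> poly (\<Prod>a\<leftarrow>diag_mat U. [:- a, 1:]) x = 0"
    using eigenvalue_root_char_poly[OF U] char_poly_upper_triangular[OF U ut] by simp
  also have "\<dots> \<longleftrightarrow> (\<exists>a\<in>set (diag_mat U). x = a)"
    unfolding poly_prod_list_zero_iff by auto
  also have "\<dots> \<longleftrightarrow> (\<exists>i<n. x = U $$ (i,i))"
    using U unfolding diag_mat_def by auto
  finally show ?thesis .
qed

lemma Sp_similar: assumes "similar_mat A B" "A \<in> carrier_mat n n" "B \<in> carrier_mat n n"
  shows "Sp A = Sp (B::complex mat)"
proof -
  have "char_poly A = char_poly B" by (rule char_poly_similar[OF assms(1)])
  thus ?thesis unfolding Sp_def using eigenvalue_root_char_poly[OF assms(2)] eigenvalue_root_char_poly[OF assms(3)]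
    by auto
qed

lemma Sp_exp:
  fixes A :: "complex mat"
  assumes A: "A \<in> carrier_mat n n"
  shows "Sp (mat_exp A) \<subseteq> exp ` Sp A" "finite (Sp A)"
proof -
  obtain es where es: "char_poly A = (\<Prod>a\<leftarrow>es. [:- a, 1:])"
    using char_poly_factorized[OF A] by auto
  obtain B P Q where sd: "schur_decomposition A es = (B,P,Q)" by (cases "schur_decomposition A es") auto
  from schur_decomposition[OF A es sd] have w: "similar_mat_wit A B P Q" and ut: "upper_triangular B"
    by auto
  from w A have B: "B \<in> carrier_mat n n" and P: "P \<in> carrier_mat n n" and Q: "Q \<in> carrier_mat n n"
    and PQ: "P * Q = 1\<^sub>m n" and QP: "Q * P = 1\<^sub>m n"
    unfolding similar_mat_wit_def Let_def by auto
  have SA: "Sp A = Sp B" using Sp_similar[OF _ A B] w unfolding similar_mat_def by blast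
  have "mat_exp A = P * mat_exp B * Q" by (rule mat_exp_sim[OF w A])
  hence "similar_mat (mat_exp A) (mat_exp B)"
    using P Q PQ QP mat_exp_carrier[OF A] mat_exp_carrier[OF B] by (intro similar_matI[where P=P and Q=Q and n=n]) auto
  hence SE: "Sp (mat_exp A) = Sp (mat_exp B)" using Sp_similar mat_exp_carrier[OF A] mat_exp_carrier[OF B] by blast
  show "Sp (mat_exp A) \<subseteq> exp ` Sp A"
  proof
    fix x assume "x \<in> Sp (mat_exp A)"
    hence "eigenvalue (mat_exp B) x" using SE unfolding Sp_def by auto
    then obtain i where i: "i < n" "x = mat_exp B $$ (i,i)"
      using ut_eigenvalue[OF mat_exp_carrier[OF B] mat_exp_ut(1)[OF B ut]] by auto
    hence "x = exp (B $$ (i,i))" using mat_exp_ut(2)[OF B ut] by simp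
    moreover have "B $$ (i,i) \<in> Sp B" unfolding Sp_def using ut_eigenvalue[OF B ut] i by auto
    hence "B $$ (i,i) \<in> Sp A" using SA by simp
    ultimately show "x \<in> exp ` Sp A" by auto
  qed
  have "Sp A \<subseteq> set es"
    unfolding Sp_def using eigenvalue_root_char_poly[OF A] es
    by (auto simp: poly_prod_list_zero_iff)
  thus "finite (Sp A)" using finite_subset by blast
qed


lemma no_root:
  fixes l l' :: complex
  assumes hyp: "\<forall>l\<in>S. \<forall>m\<in>S.
           (\<exists>q::rat. l - m = 2 * \<i> * pi * of_rat q) \<longrightarrow>
           (\<exists>z::int. l - m = 2 * \<i> * pi * of_int z)"
    and l: "l \<in> S" and l': "l' \<in> S" and d: "d \<ge> 1" and e: "exp l ^ d = exp l' ^ d"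
  shows "exp l = exp l'"
proof -
  have "exp (of_nat d * l) = exp (of_nat d * l')" using e by (simp add: exp_of_nat_mult)
  then obtain z :: int where z: "of_nat d * l = of_nat d * l' + (of_int (2 * z) * pi) * \<i>"
    unfolding exp_eq by blast
  define q :: rat where "q = of_int z / of_nat d"
  have dn: "(of_nat d :: complex) \<noteq> 0" using d by simp
  have "of_nat d * (l - l') = of_nat d * (2 * \<i> * pi * (of_int z / of_nat d))"
    using z dn by (simp add: field_simps)
  hence "l - l' = 2 * \<i> * pi * (of_int z / of_nat d)" using dn by (metis mult_left_cancel)
  moreover have "(of_rat q :: complex) = of_int z / of_nat d"
    unfolding q_def by (simp add: of_rat_divide)
  ultimately have "\<exists>q::rat. l - l' = 2 * \<i> * pi * of_rat q" by metis
  with hyp l l' obtain w :: int where "l - l' = 2 * \<i> * pi * of_int w" by blast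
  hence "l = l' + (of_int (2 * w) * pi) * \<i>" by (simp add: algebra_simps)
  thus ?thesis unfolding exp_eq by blast
qed

lemma pow_cancel:
  fixes l l' m m' :: complex
  assumes nz: "l \<noteq> 0" "m \<noteq> 0"
    and e1: "l^k1 * m = l'^k1 * m'" and e2: "l^(k1+d) * m = l'^(k1+d) * m'"
  shows "l^d = l'^d"
proof -
  have "l^d * (l^k1 * m) = l^(k1+d) * m" by (simp add: power_add algebra_simps)
  also have "\<dots> = l'^d * (l'^k1 * m')" using e2 by (simp add: power_add algebra_simps)
  also have "\<dots> = l'^d * (l^k1 * m)" using e1 by simp
  finally show ?thesis using nz by simp
qed

theorem mainTheorem9:
  fixes A B :: "complex mat" and n :: nat
  assumes "A \<in> carrier_mat n n" and "B \<in> carrier_mat n n"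
    and "\<forall>l\<in>Sp A. \<forall>m\<in>Sp A.
           (\<exists>q::rat. l - m = 2 * \<i> * pi * of_rat q) \<longrightarrow>
           (\<exists>z::int. l - m = 2 * \<i> * pi * of_int z)"
  shows "\<exists>k::nat. k \<ge> 1 \<and>
           inj_on (\<lambda>(l, m). l ^ k * m) (Sp (mat_exp A) \<times> Sp (mat_exp B))"
proof -
  let ?S = "Sp (mat_exp A)" and ?T = "Sp (mat_exp B)"
  have SA: "?S \<subseteq> exp ` Sp A" and TB: "?T \<subseteq> exp ` Sp B"
    using Sp_exp[OF assms(1)] Sp_exp[OF assms(2)] by auto
  have fS: "finite ?S" using SA Sp_exp(2)[OF assms(1)] finite_surj by blast
  have fT: "finite ?T" using TB Sp_exp(2)[OF assms(2)] finite_surj by blast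
  have nzS: "x \<noteq> 0" if "x \<in> ?S" for x using SA that by auto
  have nzT: "x \<noteq> 0" if "x \<in> ?T" for x using TB that by auto
  define C :: "complex \<times> complex \<times> complex \<times> complex \<Rightarrow> nat set" where "C = (\<lambda>(l,l',m,m'). {k::nat. l \<noteq> l' \<and> l^k*m = l'^k*m'})"
  define Bad where "Bad = (\<Union>x\<in>?S \<times> ?S \<times> ?T \<times> ?T. C x)"
  have fC: "finite (C (l,l',m,m'))" if lS: "l \<in> ?S" and l'S: "l' \<in> ?S" and mT: "m \<in> ?T" and m'T: "m' \<in> ?T" for l l' m m'
  proof (cases "C (l,l',m,m') = {}")
    case False
    then obtain k0 where k0: "k0 \<in> C (l,l',m,m')" by blast
    have "C (l,l',m,m') \<subseteq> {k0}"
    proof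
      fix k assume k: "k \<in> C (l,l',m,m')"
      have False if kk: "k1 < k2" "k1 \<in> C (l,l',m,m')" "k2 \<in> C (l,l',m,m')" for k1 k2
      proof -
        define d where "d = k2 - k1"
        have k2: "k2 = k1 + d" "d \<ge> 1" using kk(1) unfolding d_def by auto
        have ne: "l \<noteq> l'" and e1: "l^k1*m = l'^k1*m'" and e2: "l^(k1+d)*m = l'^(k1+d)*m'"
          using kk k2 unfolding C_def by auto
        have "l^d = l'^d" by (rule pow_cancel[OF nzS[OF lS] nzT[OF mT] e1 e2])
        moreover obtain a a' where "a \<in> Sp A" "a' \<in> Sp A" "l = exp a" "l' = exp a'"
          using SA lS l'S by blast
        ultimately have "l = l'" using no_root[OF assms(3) _ _ k2(2)] by blast
        thus False using ne by simp
      qed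
      hence "\<not> k < k0" "\<not> k0 < k" using k k0 by blast+
      thus "k \<in> {k0}" by simp
    qed
    thus ?thesis using finite_subset by blast
  qed simp
  have fB: "finite Bad" unfolding Bad_def using fS fT fC by (intro finite_UN_I) auto
  define k where "k = Suc (Max (insert 0 Bad))"
  have kB: "k \<notin> Bad"
  proof
    assume "k \<in> Bad"
    hence "k \<le> Max (insert 0 Bad)" using fB by simp
    thus False unfolding k_def by simp
  qed
  show ?thesis
  proof (intro exI conjI)
    show "1 \<le> k" unfolding k_def by simp
    show "inj_on (\<lambda>(l, m). l ^ k * m) (?S \<times> ?T)"
    proof (rule inj_onI, clarify)
      fix l m l' m' assume l: "l \<in> ?S" and m: "m \<in> ?T" and l': "l' \<in> ?S" and m': "m' \<in> ?T"
        and e: "l ^ k * m = l' ^ k * m'"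
      show "l = l' \<and> m = m'"
      proof (cases "l = l'")
        case True
        thus ?thesis using e nzS[OF l] by simp
      next
        case False
        hence "k \<in> C (l,l',m,m')" using e unfolding C_def by simp
        hence "k \<in> Bad" unfolding Bad_def using l l' m m' by blast
        thus ?thesis using kB by simp
      qed
    qed
  qed
qed

end
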